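(* In the uplink of the locally connected network with connectivity parameter $L$ and cell association constraint $|\mathcal C_i|\le N_c$, for any zero-forcing message passing decoding scheme and any set $\mathcal L\subseteq[K]$ of $L+1$ consecutive indices, at most $N_c$ messages $W_i$ with $i\in\mathcal L$ are decoded at base stations with indices in $\mathcal L$.
   Context: Network: $K$ base stations BS $1,\dots,K$ and $K$ mobile terminals MT $1,\dots,K$, single-antenna; the channel coefficient $H_{i,j}$ between MT $i$ and BS $j$ is zero iff $i\notin\{j,\dots,j+L\}$, nonzero coefficients generic (drawn from a continuous joint distribution). Uplink: BS $j$ receives $Y_j=\sum_iH_{i,j}X_i+Z_j$. MT $i$ has message $W_i$ and is associated with a set $\mathcal C_i\subseteq[K]$ of base stations, $|\mathcal C_i|\le N_c$. Zero-forcing message passing decoding: each message is decoded at at most one base station in its association set, and a decoded message is passed over the backhaul to the other base stations in its association set, which use it to cancel its interference; a base station decodes message $W_j$ only if, after removing the messages it received over the backhaul, its noiseless received signal depends on $W_j$ and on no other message. *)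

theory Defs
  imports Complex_Main
begin

text \<open>Indices of mobile terminals and base stations are 1..K.
  H i j is the channel coefficient between MT i and BS j; C i is the association
  set of MT i. A zero-forcing message passing decoding scheme is given by the
  ordered list of decoding steps (i, b): message W_i is decoded at BS b.
  At each step, BS b has received (over the backhaul, or decoded itself) every
  earlier-decoded message whose association set contains b; after cancelling
  those, the noiseless signal sum of H m b X_m must depend on W_i only, i.e.
  the set of remaining messages with nonzero coefficient at b is exactly {i}.\<close>

definition zfmp_scheme ::
  "nat \<Rightarrow> (nat \<Rightarrow> nat \<Rightarrow> real) \<Rightarrow> (nat \<Rightarrow> nat set) \<Rightarrow> (nat \<times> nat) list \<Rightarrow> bool" where
  "zfmp_scheme K H C steps \<longleftrightarrow>
     distinct (map fst steps) \<and>
     (\<forall>k < length steps.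
        fst (steps ! k) \<in> {1..K} \<and>
        snd (steps ! k) \<in> C (fst (steps ! k)) \<and>
        {m \<in> {1..K}. H m (snd (steps ! k)) \<noteq> 0}
          - {fst (steps ! k') | k'. k' < k \<and> snd (steps ! k) \<in> C (fst (steps ! k'))}
          = {fst (steps ! k)})"

end

theory Submission
  imports Defs
begin

lemma bs_unique_aux:
  assumes scheme: "zfmp_scheme K H C steps"
    and k: "k < k'" "k' < length steps"
    and eqb: "snd (steps ! k) = snd (steps ! k')"
  shows "False"
proof -
  have d: "distinct (map fst steps)" using scheme by (simp add: zfmp_scheme_def)
  let ?b = "snd (steps ! k)"
  have ck: "{m \<in> {1..K}. H m ?b \<noteq> 0}
          - {fst (steps ! k'') | k''. k'' < k \<and> ?b \<in> C (fst (steps ! k''))}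
          = {fst (steps ! k)}" using scheme k by (simp add: zfmp_scheme_def)
  have ck': "{m \<in> {1..K}. H m ?b \<noteq> 0}
          - {fst (steps ! k'') | k''. k'' < k' \<and> ?b \<in> C (fst (steps ! k''))}
          = {fst (steps ! k')}" using scheme k eqb by (simp add: zfmp_scheme_def)
  have i1: "fst (steps ! k') \<in> {m \<in> {1..K}. H m ?b \<noteq> 0}" using ck' by blast
  have ne: "fst (steps ! k') \<noteq> fst (steps ! k)"
  proof
    assume "fst (steps ! k') = fst (steps ! k)"
    then have "map fst steps ! k = map fst steps ! k'" using k by simp
    then have "k = k'" using nth_eq_iff_index_eq[OF d, of k k'] k by simp
    then show False using k by simp
  qed
  then have "fst (steps ! k') \<in> {fst (steps ! k'') | k''. k'' < k \<and> ?b \<in> C (fst (steps ! k''))}"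
  proof -
    have "fst (steps ! k') \<notin> {m \<in> {1..K}. H m ?b \<noteq> 0}
          - {fst (steps ! k'') | k''. k'' < k \<and> ?b \<in> C (fst (steps ! k''))}"
      unfolding ck using ne by simp
    then show ?thesis using i1 by (meson DiffI)
  qed
  then obtain k'' where k'': "k'' < k" "fst (steps ! k'') = fst (steps ! k')" by auto
  then have "map fst steps ! k'' = map fst steps ! k'" using k by simp
  then have "k'' = k'" using nth_eq_iff_index_eq[OF d, of k'' k'] k k'' by simp
  then show False using k k'' by simp
qed

lemma bs_unique:
  assumes scheme: "zfmp_scheme K H C steps"
    and p: "(i, b) \<in> set steps" "(i', b) \<in> set steps"
  shows "i = i'"
proof -
  obtain k where k: "k < length steps" "steps ! k = (i, b)" using p by (auto simp: in_set_conv_nth)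
  obtain k' where k': "k' < length steps" "steps ! k' = (i', b)" using p by (auto simp: in_set_conv_nth)
  show ?thesis
  proof (cases k k' rule: linorder_cases)
    case less then show ?thesis using bs_unique_aux[OF scheme less] k k' by auto
  next
    case equal then show ?thesis using k k' by auto
  next
    case greater then show ?thesis using bs_unique_aux[OF scheme greater] k k' by auto
  qed
qed

lemma msg_unique:
  assumes scheme: "zfmp_scheme K H C steps"
    and p: "(i, b) \<in> set steps" "(i, b') \<in> set steps"
  shows "b = b'"
proof -
  have d: "distinct (map fst steps)" using scheme by (simp add: zfmp_scheme_def)
  obtain k where k: "k < length steps" "steps ! k = (i, b)" using p by (auto simp: in_set_conv_nth)
  obtain k' where k': "k' < length steps" "steps ! k' = (i, b')" using p by (auto simp: in_set_conv_nth)
  have "map fst steps ! k = map fst steps ! k'" using k k' by simp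
  then have "k = k'" using nth_eq_iff_index_eq[OF d, of k k'] k k' by simp
  then show ?thesis using k k' by auto
qed

theorem lemma2:
  fixes K L Nc a :: nat
    and H :: "nat \<Rightarrow> nat \<Rightarrow> real"
    and C :: "nat \<Rightarrow> nat set"
    and steps :: "(nat \<times> nat) list"
  assumes channel: "\<forall>i\<in>{1..K}. \<forall>j\<in>{1..K}. (H i j = 0 \<longleftrightarrow> i \<notin> {j..j+L})"
    and assoc: "\<forall>i\<in>{1..K}. C i \<subseteq> {1..K} \<and> card (C i) \<le> Nc"
    and scheme: "zfmp_scheme K H C steps"
    and window: "1 \<le> a" "a + L \<le> K"
  shows "card {i \<in> {a..a+L}. \<exists>b\<in>{a..a+L}. (i, b) \<in> set steps} \<le> Nc"
proof -
  define P where "P = {p \<in> set steps. fst p \<in> {a..a+L} \<and> snd p \<in> {a..a+L}}"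
  have S: "{i \<in> {a..a+L}. \<exists>b\<in>{a..a+L}. (i, b) \<in> set steps} = fst ` P"
  proof (rule set_eqI)
    fix i
    show "i \<in> {i \<in> {a..a+L}. \<exists>b\<in>{a..a+L}. (i, b) \<in> set steps} \<longleftrightarrow> i \<in> fst ` P"
    proof
      assume "i \<in> {i \<in> {a..a+L}. \<exists>b\<in>{a..a+L}. (i, b) \<in> set steps}"
      then obtain b where "i \<in> {a..a+L}" "b \<in> {a..a+L}" "(i, b) \<in> set steps" by auto
      then have "(i, b) \<in> P" unfolding P_def by simp
      then show "i \<in> fst ` P" by (metis fst_conv image_eqI)
    next
      assume "i \<in> fst ` P"
      then obtain p where "p \<in> P" "i = fst p" by blast
      then show "i \<in> {i \<in> {a..a+L}. \<exists>b\<in>{a..a+L}. (i, b) \<in> set steps}"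
        unfolding P_def by (cases p) auto
    qed
  qed
  have fP: "finite P" unfolding P_def by simp
  have inj1: "inj_on fst P"
  proof (rule inj_onI)
    fix p q assume "p \<in> P" "q \<in> P" "fst p = fst q"
    then show "p = q" unfolding P_def using msg_unique[OF scheme, of "fst p" "snd p" "snd q"]
      by (cases p, cases q) simp
  qed
  have inj2: "inj_on snd P"
  proof (rule inj_onI)
    fix p q assume "p \<in> P" "q \<in> P" "snd p = snd q"
    then show "p = q" unfolding P_def using bs_unique[OF scheme, of "fst p" "snd p" "fst q"]
      by (cases p, cases q) simp
  qed
  let ?t = "a + L"
  have sub: "snd ` P \<subseteq> C ?t"
  proof
    fix b assume "b \<in> snd ` P"
    then obtain p where "p \<in> P" "b = snd p" by blast
    then obtain j where jb: "(j, b) \<in> set steps" "b \<in> {a..a+L}" unfolding P_def by (cases p) auto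
    obtain k where k: "k < length steps" "steps ! k = (j, b)" using jb by (auto simp: in_set_conv_nth)
    have ck: "{m \<in> {1..K}. H m b \<noteq> 0}
          - {fst (steps ! k'') | k''. k'' < k \<and> b \<in> C (fst (steps ! k''))}
          = {j}" and cj: "b \<in> C j"
    proof -
      have "\<forall>k < length steps.
        fst (steps ! k) \<in> {1..K} \<and>
        snd (steps ! k) \<in> C (fst (steps ! k)) \<and>
        {m \<in> {1..K}. H m (snd (steps ! k)) \<noteq> 0}
          - {fst (steps ! k') | k'. k' < k \<and> snd (steps ! k) \<in> C (fst (steps ! k'))}
          = {fst (steps ! k)}" using scheme unfolding zfmp_scheme_def by blast
      then have "fst (steps ! k) \<in> {1..K} \<and>
        snd (steps ! k) \<in> C (fst (steps ! k)) \<and>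
        {m \<in> {1..K}. H m (snd (steps ! k)) \<noteq> 0}
          - {fst (steps ! k') | k'. k' < k \<and> snd (steps ! k) \<in> C (fst (steps ! k'))}
          = {fst (steps ! k)}" using k(1) by blast
      then show "{m \<in> {1..K}. H m b \<noteq> 0}
          - {fst (steps ! k'') | k''. k'' < k \<and> b \<in> C (fst (steps ! k''))}
          = {j}" and "b \<in> C j" using k(2) by simp_all
    qed
    show "b \<in> C ?t"
    proof (cases "j = ?t")
      case True then show ?thesis using cj by simp
    next
      case False
      have "b \<in> {1..K}" using jb window by auto
      moreover have "?t \<in> {1..K}" using window by auto
      ultimately have "H ?t b \<noteq> 0" using channel jb by auto
      then have "?t \<in> {m \<in> {1..K}. H m b \<noteq> 0}" using window by auto
      moreover have "?t \<notin> {m \<in> {1..K}. H m b \<noteq> 0}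
          - {fst (steps ! k'') | k''. k'' < k \<and> b \<in> C (fst (steps ! k''))}"
        unfolding ck using False by simp
      ultimately have "?t \<in> {fst (steps ! k'') | k''. k'' < k \<and> b \<in> C (fst (steps ! k''))}"
        by (meson DiffI)
      then show ?thesis by auto
    qed
  qed
  have fC: "finite (C ?t)" using assoc window finite_subset[of "C ?t" "{1..K}"] by auto
  have "card {i \<in> {a..a+L}. \<exists>b\<in>{a..a+L}. (i, b) \<in> set steps} = card P"
    using S card_image[OF inj1] by simp
  also have "\<dots> = card (snd ` P)" using card_image[OF inj2] by simp
  also have "\<dots> \<le> card (C ?t)" using card_mono[OF fC sub] .
  also have "\<dots> \<le> Nc" using assoc window by auto
  finally show ?thesis .
qed

end
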